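(* Let $N$ be an orchard network on $X\subseteq[n]$ and let $u,v\in V_T(N)$. If $\mu(u)=\mu(v)$, then $u=v$. Consequently, the extended $\mu$-representation $\boldsymbol\mu(N)$ of an orchard network has no repeated elements, i.e. it is a set.
   Context: A (binary) phylogenetic network on a finite set $X\subseteq[n]=\{1,\dots,n\}$ is a directed acyclic graph $N=(V,A)$ without parallel arcs in which every node is exactly one of: the root (indegree 0, outdegree 1; there is exactly one), a leaf (indegree 1, outdegree 0), a tree node (indegree 1, outdegree 2), or a reticulation (indegree 2, outdegree 1); the leaves are identified with the elements of $X$. $V_T(N)$ denotes the set of leaves and tree nodes, $V_H(N)$ the set of reticulations. $m(u,v)$ is the number of directed paths from $u$ to $v$ (trivial paths allowed). Extended $\mu$-vectors: $\mu_i(u)=m(u,i)$ for $i\in[n]$ (0 if $i\notin X$), $\mu_0(u)=\sum_{h\in V_H(N)} m(u,h)$, $\mu(u)=(\mu_0(u),\dots,\mu_n(u))$; $\boldsymbol\mu(N)$ is the multiset $\{\mu(u)\mid u\in V_T(N)\}$. For distinct leaves $i,j$ with parents $p_i,p_j$: $(i,j)$ is a cherry of $N$ if $p_i=p_j$; a reticulated-cherry of $N$ if $p_i$ is a reticulation, $p_j$ is a tree node and $p_j$ is a parent of $p_i$; reducible if either. Suppressing a node with indegree 1 and outdegree 1 means deleting it and its two arcs and adding an arc from its parent to its child. The reduction $N^{(i,j)}$: if $(i,j)$ is a cherry, delete leaf $i$ and its incoming arc, then suppress $p_i$; if a reticulated-cherry, delete the arc $p_jp_i$ and suppress $p_i$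 and $p_j$. A sequence $S=s_1\cdots s_k$ of pairs is reducible in $N$ if $s_1$ is reducible in $N$ and each $s_t$ is reducible in the network obtained from $N$ by successively reducing $s_1,\dots,s_{t-1}$; $N^S$ denotes the final network; $S$ is complete if $N^S$ is the network $I_x$ consisting of a root joined by an arc to a single leaf $x$. $N$ is an orchard network if it has a complete reducible sequence. *)

theory Defs
  imports Main "HOL-Library.Multiset"
begin

text \<open>A network is a pair (V, A) of a node set and an arc set; nodes are natural
numbers and the leaves are exactly the nodes in the leaf set X (a subset of {1..n}).
Arc sets are sets, so there are no parallel arcs.\<close>

type_synonym net = "nat set \<times> (nat \<times> nat) set"

definition indeg :: "(nat \<times> nat) set \<Rightarrow> nat \<Rightarrow> nat" where
  "indeg A v = card {u. (u, v) \<in> A}"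

definition outdeg :: "(nat \<times> nat) set \<Rightarrow> nat \<Rightarrow> nat" where
  "outdeg A v = card {w. (v, w) \<in> A}"

definition is_root :: "(nat \<times> nat) set \<Rightarrow> nat \<Rightarrow> bool" where
  "is_root A v \<longleftrightarrow> indeg A v = 0 \<and> outdeg A v = 1"

definition is_leaf :: "(nat \<times> nat) set \<Rightarrow> nat \<Rightarrow> bool" where
  "is_leaf A v \<longleftrightarrow> indeg A v = 1 \<and> outdeg A v = 0"

definition is_tree_node :: "(nat \<times> nat) set \<Rightarrow> nat \<Rightarrow> bool" where
  "is_tree_node A v \<longleftrightarrow> indeg A v = 1 \<and> outdeg A v = 2"

definition is_ret :: "(nat \<times> nat) set \<Rightarrow> nat \<Rightarrow> bool" where
  "is_ret A v \<longleftrightarrow> indeg A v = 2 \<and> outdeg A v = 1"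

definition phylo_net :: "nat \<Rightarrow> nat set \<Rightarrow> net \<Rightarrow> bool" where
  "phylo_net n X N \<longleftrightarrow> (let V = fst N; A = snd N in
      finite V \<and> A \<subseteq> V \<times> V \<and> acyclic A \<and>
      (\<forall>v\<in>V. is_root A v \<or> is_leaf A v \<or> is_tree_node A v \<or> is_ret A v) \<and>
      (\<exists>!r. r \<in> V \<and> is_root A r) \<and>
      {v\<in>V. is_leaf A v} = X \<and> X \<subseteq> {1..n})"

definition V_T :: "net \<Rightarrow> nat set" where
  "V_T N = {v \<in> fst N. is_leaf (snd N) v \<or> is_tree_node (snd N) v}"

definition V_H :: "net \<Rightarrow> nat set" where
  "V_H N = {v \<in> fst N. is_ret (snd N) v}"

definition is_path :: "(nat \<times> nat) set \<Rightarrow> nat \<Rightarrow> nat \<Rightarrow> nat list \<Rightarrow> bool" where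
  "is_path A u v p \<longleftrightarrow> p \<noteq> [] \<and> hd p = u \<and> last p = v \<and> distinct p \<and>
     (\<forall>k. Suc k < length p \<longrightarrow> (p ! k, p ! Suc k) \<in> A)"

definition npaths :: "(nat \<times> nat) set \<Rightarrow> nat \<Rightarrow> nat \<Rightarrow> nat" where
  "npaths A u v = card {p. is_path A u v p}"

definition mu :: "nat \<Rightarrow> nat set \<Rightarrow> net \<Rightarrow> nat \<Rightarrow> nat list" where
  "mu n X N u = map (\<lambda>i. if i = 0 then (\<Sum>h\<in>V_H N. npaths (snd N) u h)
                           else if i \<in> X then npaths (snd N) u i else 0) [0..<Suc n]"

definition mu_rep :: "nat \<Rightarrow> nat set \<Rightarrow> net \<Rightarrow> nat list multiset" where
  "mu_rep n X N = image_mset (mu n X N) (mset_set (V_T N))"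

definition parent :: "(nat \<times> nat) set \<Rightarrow> nat \<Rightarrow> nat" where
  "parent A x = (THE p. (p, x) \<in> A)"

definition child :: "(nat \<times> nat) set \<Rightarrow> nat \<Rightarrow> nat" where
  "child A x = (THE c. (x, c) \<in> A)"

definition is_cherry :: "net \<Rightarrow> nat \<Rightarrow> nat \<Rightarrow> bool" where
  "is_cherry N i j \<longleftrightarrow> i \<noteq> j \<and> i \<in> fst N \<and> j \<in> fst N \<and>
     is_leaf (snd N) i \<and> is_leaf (snd N) j \<and> parent (snd N) i = parent (snd N) j"

definition is_ret_cherry :: "net \<Rightarrow> nat \<Rightarrow> nat \<Rightarrow> bool" where
  "is_ret_cherry N i j \<longleftrightarrow> i \<noteq> j \<and> i \<in> fst N \<and> j \<in> fst N \<and>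
     is_leaf (snd N) i \<and> is_leaf (snd N) j \<and>
     is_ret (snd N) (parent (snd N) i) \<and> is_tree_node (snd N) (parent (snd N) j) \<and>
     (parent (snd N) j, parent (snd N) i) \<in> snd N"

definition reducible :: "net \<Rightarrow> nat \<times> nat \<Rightarrow> bool" where
  "reducible N s \<longleftrightarrow> is_cherry N (fst s) (snd s) \<or> is_ret_cherry N (fst s) (snd s)"

definition suppress :: "net \<Rightarrow> nat \<Rightarrow> net" where
  "suppress N w = (let A = snd N; a = parent A w; b = child A w in
     (fst N - {w}, (A - {(a, w), (w, b)}) \<union> {(a, b)}))"

definition reduce :: "net \<Rightarrow> nat \<times> nat \<Rightarrow> net" where
  "reduce N s = (let i = fst s; j = snd s; A = snd N; pi = parent A i; pj = parent A j in
     if is_cherry N i j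
     then suppress (fst N - {i}, A - {(pi, i)}) pi
     else suppress (suppress (fst N, A - {(pj, pi)}) pi) pj)"

fun reducible_seq :: "net \<Rightarrow> (nat \<times> nat) list \<Rightarrow> bool" where
  "reducible_seq N [] = True"
| "reducible_seq N (s # S) = (reducible N s \<and> reducible_seq (reduce N s) S)"

fun reduce_seq :: "net \<Rightarrow> (nat \<times> nat) list \<Rightarrow> net" where
  "reduce_seq N [] = N"
| "reduce_seq N (s # S) = reduce_seq (reduce N s) S"

definition is_I :: "net \<Rightarrow> bool" where
  "is_I N \<longleftrightarrow> (\<exists>r x. r \<noteq> x \<and> N = ({r, x}, {(r, x)}))"

definition orchard :: "nat \<Rightarrow> nat set \<Rightarrow> net \<Rightarrow> bool" where
  "orchard n X N \<longleftrightarrow> phylo_net n X N \<and>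
     (\<exists>S. reducible_seq N S \<and> is_I (reduce_seq N S))"

end

theory Submission
  imports Defs
begin


definition succs :: "(nat \<times> nat) set \<Rightarrow> nat \<Rightarrow> nat set" where
  "succs A u = {c. (u,c) \<in> A}"
definition preds :: "(nat \<times> nat) set \<Rightarrow> nat \<Rightarrow> nat set" where
  "preds A u = {c. (c,u) \<in> A}"

lemma path_single: "is_path A x y [z] \<longleftrightarrow> x = z \<and> y = z"
  by (auto simp: is_path_def)

lemma path_refl: "is_path A x x P \<longleftrightarrow> P = [x]"
proof
  assume h: "is_path A x x P"
  show "P = [x]"
  proof (cases "length P \<ge> 2")
    case True
    have "P ! 0 = x" using h by (auto simp: is_path_def hd_conv_nth)
    moreover have "P ! (length P - 1) = x" using h by (auto simp: is_path_def last_conv_nth)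
    moreover have "distinct P" using h by (simp add: is_path_def)
    moreover have "P ! 0 \<noteq> P ! (length P - 1)"
      using distinct_conv_nth[THEN iffD1, rule_format, of P 0 "length P - 1"] \<open>distinct P\<close> True by fastforce
    ultimately have False by simp
    then show ?thesis ..
  next
    case False
    then have "length P = 1" using h by (cases P) (auto simp: is_path_def Suc_le_eq)
    then show ?thesis using h by (cases P) (auto simp: is_path_def)
  qed
qed (simp add: is_path_def)

lemma npaths_refl: "npaths A x x = 1"
  by (simp add: npaths_def path_refl)

lemma path_reach_nth:
  assumes "is_path A x y P" "k \<le> l" "l < length P"
  shows "(P ! k, P ! l) \<in> A\<^sup>*"
  using assms(2,3)
proof (induction l)
  case 0 then show ?case by simp
next
  case (Suc l)
  show ?case
  proof (cases "k = Suc l")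
    case True then show ?thesis by simp
  next
    case False
    then have "(P ! k, P ! l) \<in> A\<^sup>*" using Suc by simp
    moreover have "(P ! l, P ! Suc l) \<in> A" using assms(1) Suc.prems by (auto simp: is_path_def)
    ultimately show ?thesis by simp
  qed
qed

lemma path_reach_last:
  assumes "is_path A x y P" "z \<in> set P"
  shows "(z, y) \<in> A\<^sup>*"
proof -
  obtain k where k: "k < length P" "P ! k = z" using assms(2) by (meson in_set_conv_nth)
  have "y = P ! (length P - 1)" using assms(1) by (auto simp: is_path_def last_conv_nth)
  then show ?thesis using path_reach_nth[OF assms(1), of k "length P - 1"] k by auto
qed

lemma path_reach:
  assumes "is_path A x y P" shows "(x, y) \<in> A\<^sup>*"
  using path_reach_last[OF assms, of x] assms by (auto simp: is_path_def)

lemma npaths_unreach: "(x,y) \<notin> A\<^sup>* \<Longrightarrow> npaths A x y = 0"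
  unfolding npaths_def using path_reach by (metis (no_types, lifting) card.empty empty_Collect_eq)

lemma path_snoc:
  "is_path A x y (P @ [y]) \<longleftrightarrow> (P = [] \<and> x = y) \<or>
     (P \<noteq> [] \<and> is_path A x (last P) P \<and> (last P, y) \<in> A \<and> y \<notin> set P)"
proof (cases "P = []")
  case True then show ?thesis by (auto simp: is_path_def)
next
  case False
  have arcs: "(\<forall>k. Suc k < length (P @ [y]) \<longrightarrow> ((P@[y]) ! k, (P@[y]) ! Suc k) \<in> A) \<longleftrightarrow>
     (\<forall>k. Suc k < length P \<longrightarrow> (P ! k, P ! Suc k) \<in> A) \<and> (last P, y) \<in> A"
  proof safe
    fix k assume h: "\<forall>k. Suc k < length (P @ [y]) \<longrightarrow> ((P@[y]) ! k, (P@[y]) ! Suc k) \<in> A" "Suc k < length P"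
    then show "(P ! k, P ! Suc k) \<in> A" using h(1)[rule_format, of k] by (simp add: nth_append)
  next
    assume h: "\<forall>k. Suc k < length (P @ [y]) \<longrightarrow> ((P@[y]) ! k, (P@[y]) ! Suc k) \<in> A"
    then show "(last P, y) \<in> A" using h[rule_format, of "length P - 1"] False
      by (simp add: nth_append last_conv_nth)
  next
    fix k assume h: "\<forall>k. Suc k < length P \<longrightarrow> (P ! k, P ! Suc k) \<in> A" "(last P, y) \<in> A"
      "Suc k < length (P @ [y])"
    show "((P@[y]) ! k, (P@[y]) ! Suc k) \<in> A"
    proof (cases "Suc k < length P")
      case True then show ?thesis using h(1) by (simp add: nth_append)
    next
      case False2: False
      then have "k = length P - 1" using h(3) by simp
      then show ?thesis using h(2) False by (simp add: nth_append last_conv_nth)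
    qed
  qed
  show ?thesis using False arcs
    by (auto simp: is_path_def hd_append)
qed

lemma path_set:
  assumes "is_path A x y P" shows "set P \<subseteq> insert x (snd ` A)"
proof
  fix z assume "z \<in> set P"
  then obtain k where k: "k < length P" "P ! k = z" by (meson in_set_conv_nth)
  show "z \<in> insert x (snd ` A)"
  proof (cases k)
    case 0 then show ?thesis using assms k by (auto simp: is_path_def hd_conv_nth)
  next
    case (Suc k')
    then have "(P ! k', P ! k) \<in> A" using assms k by (auto simp: is_path_def)
    then show ?thesis using k by force
  qed
qed

lemma finite_paths:
  assumes "finite A" shows "finite {P. is_path A x y P}"
proof -
  let ?S = "insert x (snd ` A)"
  have "{P. is_path A x y P} \<subseteq> {xs. set xs \<subseteq> ?S \<and> length xs \<le> card ?S}"
  proof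
    fix P assume "P \<in> {P. is_path A x y P}"
    then have h: "is_path A x y P" by simp
    have st: "set P \<subseteq> ?S" using path_set[OF h] by auto
    have "distinct P" using h by (simp add: is_path_def)
    then have "length P = card (set P)" by (simp add: distinct_card)
    also have "\<dots> \<le> card ?S" using st assms by (intro card_mono) auto
    finally show "P \<in> {xs. set xs \<subseteq> ?S \<and> length xs \<le> card ?S}" using st by simp
  qed
  then show ?thesis using finite_lists_length_le[of ?S "card ?S"] assms by (meson finite_imageI finite_insert rev_finite_subset)
qed

lemma npaths_back:
  assumes fin: "finite A" and acy: "acyclic A" and ne: "x \<noteq> y"
  shows "npaths A x y = (\<Sum>p\<in>preds A y. npaths A x p)"
proof -
  have eq: "{P. is_path A x y P} = (\<lambda>(p,P'). P' @ [y]) ` (SIGMA p:preds A y. {P'. is_path A x p P'})"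
  proof safe
    fix P assume h: "is_path A x y P"
    then have "P \<noteq> []" by (simp add: is_path_def)
    then have Pe: "P = butlast P @ [y]" using h by (metis append_butlast_last_id is_path_def)
    with h have "is_path A x y (butlast P @ [y])" by simp
    then have "butlast P \<noteq> [] \<and> is_path A x (last (butlast P)) (butlast P) \<and> (last (butlast P), y) \<in> A"
      using ne path_snoc by blast
    then show "P \<in> (\<lambda>(p,P'). P' @ [y]) ` (SIGMA p:preds A y. {P'. is_path A x p P'})"
      using Pe by (force simp: preds_def)
  next
    fix p P' assume h: "p \<in> preds A y" "is_path A x p P'"
    have "y \<notin> set P'"
    proof
      assume "y \<in> set P'"
      then have "(y, p) \<in> A\<^sup>*" using path_reach_last[OF h(2)] by simp
      moreover have "(p, y) \<in> A" using h(1) by (simp add: preds_def)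
      ultimately have "(y,y) \<in> A\<^sup>+" by simp
      then show False using acy by (simp add: acyclic_def)
    qed
    moreover have "P' \<noteq> []" "last P' = p" using h(2) by (auto simp: is_path_def)
    ultimately show "is_path A x y (P' @ [y])" using h path_snoc by (auto simp: preds_def)
  qed
  have inj: "inj_on (\<lambda>(p,P'). P' @ [y]) (SIGMA p:preds A y. {P'. is_path A x p P'})"
    by (auto simp: inj_on_def is_path_def)
  have finp: "finite (preds A y)"
  proof -
    have "preds A y \<subseteq> fst ` A" by (force simp: preds_def)
    then show ?thesis using fin finite_subset by blast
  qed
  show ?thesis unfolding npaths_def eq card_image[OF inj]
    using finp finite_paths[OF fin] by simp
qed



definition inv :: "net \<Rightarrow> bool" where
  "inv N \<longleftrightarrow> finite (fst N) \<and> snd N \<subseteq> fst N \<times> fst N \<and> acyclic (snd N) \<and>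
    (\<forall>v\<in>fst N. is_root (snd N) v \<or> is_leaf (snd N) v \<or> is_tree_node (snd N) v \<or> is_ret (snd N) v)"

definition Lv :: "net \<Rightarrow> nat set" where
  "Lv N = {v\<in>fst N. is_leaf (snd N) v}"

definition rs :: "net \<Rightarrow> nat \<Rightarrow> nat" where
  "rs N u = (\<Sum>h\<in>V_H N. npaths (snd N) u h)"

definition eqv :: "net \<Rightarrow> nat \<Rightarrow> nat \<Rightarrow> bool" where
  "eqv N u v \<longleftrightarrow> (\<forall>x\<in>Lv N. npaths (snd N) u x = npaths (snd N) v x) \<and> rs N u = rs N v"

definition injN :: "net \<Rightarrow> bool" where
  "injN N \<longleftrightarrow> (\<forall>u\<in>V_T N. \<forall>v\<in>V_T N. eqv N u v \<longrightarrow> u = v)"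

lemma indeg_preds: "indeg A x = card (preds A x)" by (simp add: indeg_def preds_def)
lemma outdeg_succs: "outdeg A x = card (succs A x)" by (simp add: outdeg_def succs_def)

lemma fin_preds: "finite A \<Longrightarrow> finite (preds A x)"
proof -
  assume "finite A"
  moreover have "preds A x \<subseteq> fst ` A" by (force simp: preds_def)
  ultimately show ?thesis using finite_subset by blast
qed

lemma fin_succs: "finite A \<Longrightarrow> finite (succs A x)"
proof -
  assume "finite A"
  moreover have "succs A x \<subseteq> snd ` A" by (force simp: succs_def)
  ultimately show ?thesis using finite_subset by blast
qed

lemma card1: "card S = 1 \<Longrightarrow> \<exists>p. S = {p}"
  using card_1_singletonE by blast

lemma card2: "card S = 2 \<Longrightarrow> a \<in> S \<Longrightarrow> \<exists>b. b \<noteq> a \<and> S = {a, b}"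
proof -
  assume h: "card S = 2" "a \<in> S"
  then have "card (S - {a}) = 1" by (simp add: card_Diff_singleton_if)
  then obtain b where "S - {a} = {b}" using card1 by blast
  then show ?thesis using h by auto
qed

lemma parent_eq: "preds A x = {p} \<Longrightarrow> parent A x = p"
  unfolding parent_def preds_def by (metis (mono_tags, lifting) mem_Collect_eq singletonI singleton_iff the_equality)

lemma child_eq: "succs A x = {p} \<Longrightarrow> child A x = p"
  unfolding child_def succs_def by (metis (mono_tags, lifting) mem_Collect_eq singletonI singleton_iff the_equality)

lemma sink_rt: "succs A c = {} \<Longrightarrow> (c,x) \<in> A\<^sup>* \<Longrightarrow> x = c"
  by (metis converse_rtranclE empty_iff mem_Collect_eq succs_def)

lemma npaths_sink: "succs A c = {} \<Longrightarrow> npaths A c y = (if y = c then 1 else 0)"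
  using sink_rt npaths_unreach npaths_refl by metis

lemma leaf_sets: "finite A \<Longrightarrow> is_leaf A x \<Longrightarrow> succs A x = {} \<and> (\<exists>p. preds A x = {p})"
  unfolding is_leaf_def indeg_preds outdeg_succs using fin_succs card1 by auto

lemma card_img_eq: "inj_on g S \<Longrightarrow> T = g ` S \<Longrightarrow> card T = card S"
  by (simp add: card_image)



lemma cherry_step:
  assumes inv: "inv (V, A)" and ch: "is_cherry (V, A) i j"
  shows "inv (reduce (V, A) (i, j)) \<and> (injN (reduce (V, A) (i, j)) \<longrightarrow> injN (V, A))"
proof -
  have finV: "finite V" and sub: "A \<subseteq> V \<times> V" and acy: "acyclic A"
    and cls: "\<forall>v\<in>V. is_root A v \<or> is_leaf A v \<or> is_tree_node A v \<or> is_ret A v"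
    using inv by (auto simp: inv_def)
  have finA: "finite A" using finV sub by (meson finite_SigmaI finite_subset)
  have ij: "i \<noteq> j" "i \<in> V" "j \<in> V" "is_leaf A i" "is_leaf A j" "parent A i = parent A j"
    using ch by (auto simp: is_cherry_def)
  obtain p where Pi: "preds A i = {p}" and Si: "succs A i = {}" using leaf_sets[OF finA ij(4)] by blast
  obtain p' where Pj: "preds A j = {p'}" and Sj: "succs A j = {}" using leaf_sets[OF finA ij(5)] by blast
  have "p' = p" using parent_eq[OF Pi] parent_eq[OF Pj] ij(6) by simp
  then have Pj: "preds A j = {p}" using Pj by simp
  have pi_arc: "(p,i) \<in> A" "(p,j) \<in> A" using Pi Pj by (auto simp: preds_def)
  then have pV: "p \<in> V" using sub by auto
  have ijs: "{i,j} \<subseteq> succs A p" using pi_arc by (auto simp: succs_def)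
  then have "2 \<le> card (succs A p)" using ij(1) fin_succs[OF finA]
    by (metis card_2_iff card_mono)
  then have tp: "is_tree_node A p" using cls pV
    by (auto simp: is_root_def is_leaf_def is_ret_def outdeg_succs)
  then have "card (succs A p) = 2" by (simp add: is_tree_node_def outdeg_succs)
  then have Sp: "succs A p = {i,j}" using ijs fin_succs[OF finA] ij(1)
    by (metis card_2_iff card_subset_eq finite.emptyI finite.insertI)
  obtain q where Pp: "preds A p = {q}" using tp card1 by (auto simp: is_tree_node_def indeg_preds)
  have arcs: "\<And>z. (z,i) \<in> A \<longleftrightarrow> z = p" "\<And>z. (z,j) \<in> A \<longleftrightarrow> z = p" "\<And>z. (i,z) \<notin> A"
     "\<And>z. (j,z) \<notin> A" "\<And>z. (p,z) \<in> A \<longleftrightarrow> z = i \<or> z = j" "\<And>z. (z,p) \<in> A \<longleftrightarrow> z = q"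
    using Pi Pj Si Sj Sp Pp by (auto simp: preds_def succs_def set_eq_iff)
  have qV: "q \<in> V" using arcs(6) sub by auto
  have qp: "q \<noteq> p" using arcs(6)[of q] acy by (auto simp: acyclic_def)
  have qi: "q \<noteq> i" "q \<noteq> j" using arcs(3)[of p] arcs(4)[of p] arcs(6)[of q] by auto
  have pij: "p \<noteq> i" "p \<noteq> j" using arcs by auto
  define V' where "V' = V - {i} - {p}"
  define A' where "A' = A - {(p,i)} - {(q,p),(p,j)} \<union> {(q,j)}"
  have red: "reduce (V, A) (i, j) = (V', A')"
  proof -
    have "preds (A - {(p,i)}) p = {q}" "succs (A - {(p,i)}) p = {j}"
      using arcs pij qi ij(1) by (auto simp: preds_def succs_def)
    then have "parent (A - {(p,i)}) p = q" "child (A - {(p,i)}) p = j"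
      using parent_eq child_eq by auto
    then show ?thesis using ch parent_eq[OF Pi]
      by (simp add: reduce_def suppress_def Let_def V'_def A'_def)
  qed
  have finA': "finite A'" using finA by (simp add: A'_def)
  have A'tr: "A' \<subseteq> A\<^sup>+"
  proof
    fix e assume "e \<in> A'"
    then show "e \<in> A\<^sup>+"
    proof (cases "e = (q,j)")
      case True
      have "(q,p) \<in> A" "(p,j) \<in> A" using arcs by auto
      then show ?thesis using True by auto
    next
      case False then show ?thesis using \<open>e \<in> A'\<close> by (auto simp: A'_def intro: r_into_trancl')
    qed
  qed
  have acy': "acyclic A'" using acyclic_subset[OF _ A'tr] acy by (simp add: acyclic_def)
  have sub': "A' \<subseteq> V' \<times> V'"
    using sub arcs qV qp qi ij pij by (auto simp: A'_def V'_def)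
  have succs': "\<And>x. x \<in> V' \<Longrightarrow> succs A' x = (\<lambda>z. if z = p then j else z) ` succs A x"
    using arcs qi pij qp ij(1) by (auto simp: succs_def A'_def V'_def image_iff)
  have preds': "\<And>x. x \<in> V' \<Longrightarrow> preds A' x = (\<lambda>z. if z = p then q else z) ` preds A x"
    using arcs qi pij qp ij(1) by (auto simp: preds_def A'_def V'_def image_iff)
  have outd: "\<And>x. x \<in> V' \<Longrightarrow> outdeg A' x = outdeg A x"
  proof -
    fix x assume x: "x \<in> V'"
    have "inj_on (\<lambda>z. if z = p then j else z) (succs A x)"
      using arcs x by (auto simp: inj_on_def succs_def V'_def)
    then show "outdeg A' x = outdeg A x" unfolding outdeg_succs succs'[OF x] by (rule card_image)
  qed
  have ind: "\<And>x. x \<in> V' \<Longrightarrow> indeg A' x = indeg A x"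
  proof -
    fix x assume x: "x \<in> V'"
    have "inj_on (\<lambda>z. if z = p then q else z) (preds A x)"
      using arcs x by (auto simp: inj_on_def preds_def V'_def)
    then show "indeg A' x = indeg A x" unfolding indeg_preds preds'[OF x] by (rule card_image)
  qed
  have types: "\<And>x. x \<in> V' \<Longrightarrow> (is_root A' x = is_root A x) \<and> (is_leaf A' x = is_leaf A x) \<and>
      (is_tree_node A' x = is_tree_node A x) \<and> (is_ret A' x = is_ret A x)"
    using outd ind by (simp add: is_root_def is_leaf_def is_tree_node_def is_ret_def)
  have inv': "inv (V', A')"
    using finV sub' acy' cls types by (auto simp: inv_def V'_def)
  have wfR: "wf (A\<^sup>+)" using finite_acyclic_wf[OF finA acy] wf_trancl by blast
  have M1: "\<And>x y. x \<noteq> p \<Longrightarrow> y \<in> V' \<Longrightarrow> npaths A' x y = npaths A x y"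
  proof -
    fix x y assume xp: "x \<noteq> p" and yV: "y \<in> V'"
    show "npaths A' x y = npaths A x y" using yV
    proof (induction y rule: wf_induct_rule[OF wfR])
      case (1 y)
      show ?case
      proof (cases "x = y")
        case True then show ?thesis by (simp add: npaths_refl)
      next
        case ne: False
        show ?thesis
        proof (cases "y = j")
          case True
          have "preds A' j = {q}" using preds'[of j] Pj ij V'_def pij by auto
          then have "npaths A' x y = npaths A' x q" using npaths_back[OF finA' acy' ne] True by simp
          also have "\<dots> = npaths A x q"
          proof -
            have "(q,p) \<in> A" "(p,j) \<in> A" using arcs by auto
            then have "(q,j) \<in> A\<^sup>+" by auto
            then show ?thesis using 1 qV qi qp True by (auto simp: V'_def)
          qed
          also have "\<dots> = npaths A x p" using npaths_back[OF finA acy xp] Pp by simp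
          also have "\<dots> = npaths A x y" using npaths_back[OF finA acy ne] Pj True by simp
          finally show ?thesis .
        next
          case False
          have pn: "p \<notin> preds A y" using arcs False 1(2) by (auto simp: preds_def V'_def)
          have "preds A' y = preds A y" using preds'[OF 1(2)] pn by (auto simp: image_iff)
          have "npaths A' x y = (\<Sum>z\<in>preds A y. npaths A' x z)"
            using npaths_back[OF finA' acy' ne] \<open>preds A' y = preds A y\<close> by simp
          also have "\<dots> = (\<Sum>z\<in>preds A y. npaths A x z)"
          proof (rule sum.cong)
            fix z assume z: "z \<in> preds A y"
            then have "(z,y) \<in> A" by (simp add: preds_def)
            moreover have "z \<in> V'" using z pn arcs sub \<open>(z,y) \<in> A\<close> by (auto simp: V'_def)
            ultimately show "npaths A' x z = npaths A x z" using 1 by auto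
          qed simp
          also have "\<dots> = npaths A x y" using npaths_back[OF finA acy ne] by simp
          finally show ?thesis .
        qed
      qed
    qed
  qed
  have pnl: "\<not> is_leaf A p" "\<not> is_ret A p" "\<not> is_ret A i"
    using tp ij(4) by (auto simp: is_tree_node_def is_leaf_def is_ret_def)
  have LvEq: "Lv (V', A') = Lv (V, A) - {i}"
    using types pnl by (auto simp: Lv_def V'_def)
  have VHEq: "V_H (V', A') = V_H (V, A)"
    using types pnl by (auto simp: V_H_def V'_def)
  have VTEq: "V_T (V', A') = V_T (V, A) - {i, p}"
    using types by (auto simp: V_T_def V'_def)
  have np_i: "\<And>y. npaths A i y = (if y = i then 1 else 0)" using npaths_sink[OF Si] by simp
  have np_j: "\<And>y. npaths A j y = (if y = j then 1 else 0)" using npaths_sink[OF Sj] by simp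
  have np_p: "\<And>y. npaths A p y = (if y = p \<or> y = i \<or> y = j then 1 else 0)"
  proof -
    fix y
    show "npaths A p y = (if y = p \<or> y = i \<or> y = j then 1 else 0)"
    proof (cases "y = p \<or> y = i \<or> y = j")
      case True
      moreover have "npaths A p i = 1" using npaths_back[OF finA acy pij(1)] Pi npaths_refl by simp
      moreover have "npaths A p j = 1" using npaths_back[OF finA acy pij(2)] Pj npaths_refl by simp
      ultimately show ?thesis using npaths_refl by auto
    next
      case False
      have "(p, y) \<notin> A\<^sup>*"
      proof
        assume "(p, y) \<in> A\<^sup>*"
        then show False
        proof (cases rule: converse_rtranclE)
          case base then show False using False by simp
        next
          case (step c)
          then have "c = i \<or> c = j" using arcs by auto
          then show False using step sink_rt[OF Si] sink_rt[OF Sj] False by blast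
        qed
      qed
      then show ?thesis using npaths_unreach False by simp
    qed
  qed
  have np_x: "\<And>x. x \<noteq> i \<Longrightarrow> x \<noteq> j \<Longrightarrow> x \<noteq> p \<Longrightarrow> npaths A x i = npaths A x j"
  proof -
    fix x assume x: "x \<noteq> i" "x \<noteq> j" "x \<noteq> p"
    have "npaths A x i = npaths A x p" using npaths_back[OF finA acy x(1)] Pi by simp
    also have "\<dots> = npaths A x j" using npaths_back[OF finA acy x(2)] Pj by simp
    finally show "npaths A x i = npaths A x j" .
  qed
  have VHnot: "\<And>h. h \<in> V_H (V, A) \<Longrightarrow> h \<noteq> i \<and> h \<noteq> j \<and> h \<noteq> p"
    using tp ij(4,5) by (auto simp: V_H_def is_tree_node_def is_leaf_def is_ret_def)
  have rs0: "\<And>w. w = i \<or> w = j \<or> w = p \<Longrightarrow> rs (V, A) w = 0"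
  proof -
    fix w assume w: "w = i \<or> w = j \<or> w = p"
    have "\<And>h. h \<in> V_H (V, A) \<Longrightarrow> npaths A w h = 0"
      using w VHnot np_i np_j np_p by auto
    then show "rs (V, A) w = 0" by (simp add: rs_def)
  qed
  have VHV': "V_H (V, A) \<subseteq> V'" using VHnot by (auto simp: V_H_def V'_def)
  have rsEq: "\<And>w. w \<noteq> p \<Longrightarrow> rs (V', A') w = rs (V, A) w"
    unfolding rs_def VHEq using M1 VHV' by (auto intro!: sum.cong)
  have LvV': "Lv (V', A') \<subseteq> V'" by (auto simp: Lv_def)
  have iLv: "i \<in> Lv (V, A)" "j \<in> Lv (V, A)" using ij by (auto simp: Lv_def)
  show ?thesis
  proof (intro conjI impI)
    show "inv (reduce (V, A) (i, j))" using inv' red by simp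
  next
    assume IH0: "injN (reduce (V, A) (i, j))"
    then have IH: "\<And>u v. u \<in> V_T (V', A') \<Longrightarrow> v \<in> V_T (V', A') \<Longrightarrow> eqv (V', A') u v \<Longrightarrow> u = v"
      using red by (auto simp: injN_def)
    have special: "\<And>u v. u = i \<or> u = p \<Longrightarrow> v \<in> V_T (V, A) \<Longrightarrow> eqv (V, A) u v \<Longrightarrow> v = u"
    proof -
      fix u v assume u: "u = i \<or> u = p" and v: "v \<in> V_T (V, A)" and e: "eqv (V, A) u v"
      have ei: "npaths A v i = npaths A u i" and ej: "npaths A v j = npaths A u j"
        using e iLv by (auto simp: eqv_def)
      show "v = u"
      proof (rule ccontr)
        assume vu: "v \<noteq> u"
        show False
        proof (cases "v = i \<or> v = j \<or> v = p")
          case True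
          have vals: "npaths A i i = 1" "npaths A i j = 0" "npaths A j i = 0" "npaths A j j = 1"
            "npaths A p i = 1" "npaths A p j = 1"
            using np_i[of i] np_i[of j] np_j[of i] np_j[of j] np_p[of i] np_p[of j] ij(1) by simp_all
          from True u vu ei ej vals show False by (elim disjE) simp_all
        next
          case False
          then have nx: "npaths A v i = npaths A v j" using np_x by auto
          show False
          proof (cases "u = i")
            case True then show False using nx ei ej np_i[of i] np_i[of j] ij(1) by simp
          next
            case up: False
            then have up: "u = p" using u by simp
            have vV: "v \<in> V_T (V', A')" using v False VTEq by auto
            have "j \<in> V_T (V, A)" using ij by (simp add: V_T_def)
            then have jV: "j \<in> V_T (V', A')" using VTEq ij(1) pij(2) by blast
            have "eqv (V', A') v j"
              unfolding eqv_def
            proof (intro conjI ballI)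
              fix x assume x: "x \<in> Lv (V', A')"
              then have xV: "x \<in> V'" "x \<in> Lv (V, A)" using LvV' LvEq by auto
              have "npaths A' v x = npaths A v x" using M1[of v x] False xV by blast
              also have "\<dots> = npaths A p x" using e xV(2) up unfolding eqv_def by simp
              also have "\<dots> = npaths A j x" using np_p[of x] np_j[of x] xV(1) unfolding V'_def by simp
              also have "\<dots> = npaths A' j x" using M1[of j x] pij xV by simp
              finally show "npaths (snd (V', A')) v x = npaths (snd (V', A')) j x" by simp
            next
              have "rs (V', A') v = rs (V, A) v" using rsEq False by auto
              also have "\<dots> = rs (V, A) p" using e up by (simp add: eqv_def)
              also have "\<dots> = rs (V, A) j" using rs0 by simp
              also have "\<dots> = rs (V', A') j" using rsEq pij by auto
              finally show "rs (V', A') v = rs (V', A') j" .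
            qed
            then have "v = j" using IH vV jV by blast
            then show False using False by simp
          qed
        qed
      qed
    qed
    have esym: "\<And>u v. eqv (V, A) u v \<Longrightarrow> eqv (V, A) v u" by (auto simp: eqv_def)
    show "injN (V, A)" unfolding injN_def
    proof (intro ballI impI)
      fix u v assume u: "u \<in> V_T (V, A)" and v: "v \<in> V_T (V, A)" and e: "eqv (V, A) u v"
      show "u = v"
      proof (cases "u = i \<or> u = p")
        case True then show ?thesis using special v e by metis
      next
        case nu: False
        show ?thesis
        proof (cases "v = i \<or> v = p")
          case True then show ?thesis using special[OF True u esym[OF e]] by simp
        next
          case nv: False
          have uV: "u \<in> V_T (V', A')" "v \<in> V_T (V', A')" using u v nu nv VTEq by auto
          have "eqv (V', A') u v" unfolding eqv_def
          proof (intro conjI ballI)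
            fix x assume x: "x \<in> Lv (V', A')"
            then have xV: "x \<in> V'" "x \<in> Lv (V, A)" using LvV' LvEq by auto
            show "npaths (snd (V', A')) u x = npaths (snd (V', A')) v x"
              using M1 nu nv xV e by (auto simp: eqv_def)
          next
            show "rs (V', A') u = rs (V', A') v" using rsEq nu nv e by (auto simp: eqv_def)
          qed
          then show ?thesis using IH uV by blast
        qed
      qed
    qed
  qed
qed



lemma ret_step:
  assumes inv: "inv (V, A)" and rc: "is_ret_cherry (V, A) i j"
  shows "inv (reduce (V, A) (i, j)) \<and> (injN (reduce (V, A) (i, j)) \<longrightarrow> injN (V, A))"
proof -
  have finV: "finite V" and sub: "A \<subseteq> V \<times> V" and acy: "acyclic A"
    and cls: "\<forall>v\<in>V. is_root A v \<or> is_leaf A v \<or> is_tree_node A v \<or> is_ret A v"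
    using inv by (auto simp: inv_def)
  have finA: "finite A" using finV sub by (meson finite_SigmaI finite_subset)
  have ij: "i \<noteq> j" "i \<in> V" "j \<in> V" "is_leaf A i" "is_leaf A j"
      "is_ret A (parent A i)" "is_tree_node A (parent A j)" "(parent A j, parent A i) \<in> A"
    using rc by (auto simp: is_ret_cherry_def)
  obtain pi where Pi: "preds A i = {pi}" and Si: "succs A i = {}" using leaf_sets[OF finA ij(4)] by blast
  obtain pj where Pj: "preds A j = {pj}" and Sj: "succs A j = {}" using leaf_sets[OF finA ij(5)] by blast
  have pari: "parent A i = pi" and parj: "parent A j = pj" using parent_eq Pi Pj by auto
  have rpi: "is_ret A pi" and tpj: "is_tree_node A pj" and pjpi: "(pj, pi) \<in> A"
    using ij pari parj by auto
  have ipi: "(pi, i) \<in> A" "(pj, j) \<in> A" using Pi Pj by (auto simp: preds_def)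
  have "card (succs A pi) = 1" using rpi by (simp add: is_ret_def outdeg_succs)
  then obtain z where "succs A pi = {z}" using card1 by blast
  then have Spi: "succs A pi = {i}" using ipi by (auto simp: succs_def)
  have c2: "card (preds A pi) = 2" using rpi by (simp add: is_ret_def indeg_preds)
  have pjp: "pj \<in> preds A pi" using pjpi by (simp add: preds_def)
  obtain a where apj: "a \<noteq> pj" and Ppi: "preds A pi = {pj, a}" using card2[OF c2 pjp] by (elim exE conjE)
  have jpi: "j \<noteq> pi" using Sj Spi by auto
  have "{j, pi} \<subseteq> succs A pj" using ipi pjpi by (auto simp: succs_def)
  moreover have "card (succs A pj) = 2" using tpj by (simp add: is_tree_node_def outdeg_succs)
  ultimately have Spj: "succs A pj = {j, pi}" using fin_succs[OF finA] jpi
    by (metis card_2_iff card_subset_eq finite.emptyI finite.insertI)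
  obtain c where Ppj: "preds A pj = {c}" using tpj card1 by (auto simp: is_tree_node_def indeg_preds)
  have arcs: "\<And>z. (z,i) \<in> A \<longleftrightarrow> z = pi" "\<And>z. (z,j) \<in> A \<longleftrightarrow> z = pj" "\<And>z. (i,z) \<notin> A"
     "\<And>z. (j,z) \<notin> A" "\<And>z. (pi,z) \<in> A \<longleftrightarrow> z = i" "\<And>z. (z,pi) \<in> A \<longleftrightarrow> z = pj \<or> z = a"
     "\<And>z. (pj,z) \<in> A \<longleftrightarrow> z = j \<or> z = pi" "\<And>z. (z,pj) \<in> A \<longleftrightarrow> z = c"
    using Pi Pj Si Sj Spi Ppi Spj Ppj by (auto simp: preds_def succs_def set_eq_iff)
  have irr: "\<And>z. (z, z) \<notin> A" using acy by (auto simp: acyclic_def)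
  have aV: "a \<in> V" and cV: "c \<in> V" and piV: "pi \<in> V" and pjV: "pj \<in> V"
    using arcs(6)[of a] arcs(8)[of c] sub ipi by auto
  have d1: "pi \<noteq> pj" "pi \<noteq> i" "pj \<noteq> i" "pj \<noteq> j" using jpi Spi Spj Si irr arcs(7)[of pj] arcs(3)
    by auto
  have d2: "a \<noteq> pi" "a \<noteq> i" "a \<noteq> j" using irr[of pi] arcs(6)[of a] arcs(3)[of pi] arcs(4)[of pi] by auto
  have d3: "c \<noteq> pj" "c \<noteq> pi" "c \<noteq> i" "c \<noteq> j"
    using irr[of pj] arcs(8)[of c] arcs(5)[of pj] arcs(3)[of pj] arcs(4)[of pj] d1 by auto
  have notch: "\<not> is_cherry (V, A) i j"
    using pari parj rpi tpj d1 by (auto simp: is_cherry_def is_ret_def is_tree_node_def)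
  define V' where "V' = V - {pi} - {pj}"
  define A1 where "A1 = A - {(pj,pi)}"
  define A2 where "A2 = A1 - {(a,pi),(pi,i)} \<union> {(a,i)}"
  define A' where "A' = A2 - {(c,pj),(pj,j)} \<union> {(c,j)}"
  have red: "reduce (V, A) (i, j) = (V', A')"
  proof -
    have "preds A1 pi = {a}" "succs A1 pi = {i}"
      using Ppi Spi apj d1 by (auto simp: preds_def succs_def A1_def)
    then have s1: "suppress (V, A1) pi = (V - {pi}, A2)"
      using parent_eq child_eq by (simp add: suppress_def A2_def)
    have "preds A2 pj = {c}" "succs A2 pj = {j}"
      using arcs d1 d2 d3 apj ij(1) jpi by (auto simp: preds_def succs_def A1_def A2_def)
    then have s2: "suppress (V - {pi}, A2) pj = (V', A')"
      using parent_eq child_eq by (simp add: suppress_def A'_def V'_def)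
    show ?thesis using notch pari parj s1 s2 by (simp add: reduce_def Let_def A1_def)
  qed
  have Aeq: "A' = A - {(pj,pi),(a,pi),(pi,i),(c,pj),(pj,j)} \<union> {(a,i),(c,j)}"
    using d1 d2 d3 ij(1) by (auto simp: A'_def A2_def A1_def)
  have finA': "finite A'" using finA by (simp add: Aeq)
  have A'tr: "A' \<subseteq> A\<^sup>+"
  proof
    fix e assume e: "e \<in> A'"
    have "(a,pi) \<in> A" "(pi,i) \<in> A" "(c,pj) \<in> A" "(pj,j) \<in> A" using arcs by auto
    then have "(a,i) \<in> A\<^sup>+" "(c,j) \<in> A\<^sup>+" by auto
    then show "e \<in> A\<^sup>+" using e unfolding Aeq by (auto intro: r_into_trancl')
  qed
  have acy': "acyclic A'" using acyclic_subset[OF _ A'tr] acy by (simp add: acyclic_def)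
  have sub': "A' \<subseteq> V' \<times> V'"
  proof
    fix e assume e: "e \<in> A'"
    show "e \<in> V' \<times> V'"
    proof (cases "e = (a,i) \<or> e = (c,j)")
      case True then show ?thesis using aV cV ij d1 d2 d3 apj jpi by (auto simp: V'_def)
    next
      case False
      then obtain x y where xy: "e = (x,y)" "(x,y) \<in> A" "(x,y) \<notin> {(pj,pi),(a,pi),(pi,i),(c,pj),(pj,j)}"
        using e unfolding Aeq by (cases e) auto
      then have "x \<noteq> pi" "x \<noteq> pj" "y \<noteq> pi" "y \<noteq> pj" using arcs(5,6,7,8) by auto
      then show ?thesis using xy sub by (auto simp: V'_def)
    qed
  qed
  have succs': "\<And>x. x \<in> V' \<Longrightarrow> succs A' x = (\<lambda>z. if z = pi then i else if z = pj then j else z) ` succs A x"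
  proof -
    fix x assume x: "x \<in> V'"
    then have "x \<noteq> pi" "x \<noteq> pj" by (auto simp: V'_def)
    then show "succs A' x = (\<lambda>z. if z = pi then i else if z = pj then j else z) ` succs A x"
      using arcs d1 d2 d3 apj jpi ij(1) unfolding succs_def Aeq by (auto simp: image_iff)
  qed
  have preds': "\<And>x. x \<in> V' \<Longrightarrow> preds A' x = (\<lambda>z. if z = pi then a else if z = pj then c else z) ` preds A x"
  proof -
    fix x assume x: "x \<in> V'"
    then have "x \<noteq> pi" "x \<noteq> pj" by (auto simp: V'_def)
    then show "preds A' x = (\<lambda>z. if z = pi then a else if z = pj then c else z) ` preds A x"
      using arcs d1 d2 d3 apj jpi ij(1) unfolding preds_def Aeq by (auto simp: image_iff)
  qed
  have outd: "\<And>x. x \<in> V' \<Longrightarrow> outdeg A' x = outdeg A x"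
  proof -
    fix x assume x: "x \<in> V'"
    then have "x \<noteq> pi" "x \<noteq> pj" by (auto simp: V'_def)
    then have "inj_on (\<lambda>z. if z = pi then i else if z = pj then j else z) (succs A x)"
      using arcs ij(1) by (auto simp: inj_on_def succs_def)
    then show "outdeg A' x = outdeg A x" unfolding outdeg_succs succs'[OF x] by (rule card_image)
  qed
  have ind: "\<And>x. x \<in> V' \<Longrightarrow> indeg A' x = indeg A x"
  proof -
    fix x assume x: "x \<in> V'"
    then have "x \<noteq> pi" "x \<noteq> pj" by (auto simp: V'_def)
    then have "inj_on (\<lambda>z. if z = pi then a else if z = pj then c else z) (preds A x)"
      using arcs by (auto simp: inj_on_def preds_def)
    then show "indeg A' x = indeg A x" unfolding indeg_preds preds'[OF x] by (rule card_image)
  qed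
  have types: "\<And>x. x \<in> V' \<Longrightarrow> (is_root A' x = is_root A x) \<and> (is_leaf A' x = is_leaf A x) \<and>
      (is_tree_node A' x = is_tree_node A x) \<and> (is_ret A' x = is_ret A x)"
    using outd ind by (simp add: is_root_def is_leaf_def is_tree_node_def is_ret_def)
  have inv': "inv (V', A')"
    using finV sub' acy' cls types by (auto simp: inv_def V'_def)
  have pnl: "\<not> is_leaf A pi" "\<not> is_leaf A pj" "\<not> is_ret A pj" "\<not> is_ret A i" "\<not> is_ret A j"
    "\<not> is_tree_node A pi" "\<not> is_leaf A pi"
    using tpj rpi ij(4,5) by (auto simp: is_tree_node_def is_leaf_def is_ret_def)
  have LvEq: "Lv (V', A') = Lv (V, A)"
  proof -
    have "\<And>x. x \<in> V' \<Longrightarrow> is_leaf A' x = is_leaf A x" using types by blast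
    then show ?thesis using pnl unfolding Lv_def V'_def by auto
  qed
  have VHEq: "V_H (V', A') = V_H (V, A) - {pi}"
  proof -
    have "\<And>x. x \<in> V' \<Longrightarrow> is_ret A' x = is_ret A x" using types by blast
    then show ?thesis using pnl unfolding V_H_def V'_def by auto
  qed
  have VTEq: "V_T (V', A') = V_T (V, A) - {pj}"
  proof -
    have "\<And>x. x \<in> V' \<Longrightarrow> is_leaf A' x = is_leaf A x \<and> is_tree_node A' x = is_tree_node A x"
      using types by blast
    then show ?thesis using pnl unfolding V_T_def V'_def by auto
  qed
  have piVH: "pi \<in> V_H (V, A)" using piV rpi by (simp add: V_H_def)
  have finVH: "finite (V_H (V, A))" using finV by (simp add: V_H_def)
  have wfR: "wf (A\<^sup>+)" using finite_acyclic_wf[OF finA acy] wf_trancl by blast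
  have P'j: "preds A' j = {c}" using preds'[of j] Pj ij(3) d1 jpi unfolding V'_def by auto
  have P'i: "preds A' i = {a}" using preds'[of i] Pi ij(2) d1 unfolding V'_def by auto
  have S'j: "succs A' j = {}" using succs'[of j] Sj ij(3) d1 jpi unfolding V'_def by auto
  have M1: "\<And>x y. x \<noteq> pi \<Longrightarrow> x \<noteq> pj \<Longrightarrow> y \<in> V' \<Longrightarrow> y \<noteq> i \<Longrightarrow> npaths A' x y = npaths A x y"
  proof -
    fix x y assume xp: "x \<noteq> pi" "x \<noteq> pj" and yV: "y \<in> V'" "y \<noteq> i"
    show "npaths A' x y = npaths A x y" using yV
    proof (induction y rule: wf_induct_rule[OF wfR])
      case (1 y)
      show ?case
      proof (cases "x = y")
        case True then show ?thesis by (simp add: npaths_refl)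
      next
        case ne: False
        show ?thesis
        proof (cases "y = j")
          case True
          then have "npaths A' x y = npaths A' x c" using npaths_back[OF finA' acy' ne] P'j by simp
          also have "\<dots> = npaths A x c"
          proof -
            have "(c,pj) \<in> A" "(pj,j) \<in> A" using arcs by auto
            then have "(c,j) \<in> A\<^sup>+" by auto
            moreover have "c \<in> V'" using cV d3 by (simp add: V'_def)
            ultimately show ?thesis using 1 d3 True by blast
          qed
          also have "\<dots> = npaths A x pj" using npaths_back[OF finA acy xp(2)] Ppj by simp
          also have "\<dots> = npaths A x y" using npaths_back[OF finA acy ne] Pj True by simp
          finally show ?thesis .
        next
          case False
          have pn: "pi \<notin> preds A y" "pj \<notin> preds A y"
            using arcs(5)[of y] arcs(7)[of y] False 1(2,3) unfolding preds_def V'_def by auto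
          have "preds A' y = preds A y" using preds'[OF 1(2)] pn by (auto simp: image_iff)
          have "npaths A' x y = (\<Sum>z\<in>preds A y. npaths A' x z)"
            using npaths_back[OF finA' acy' ne] \<open>preds A' y = preds A y\<close> by simp
          also have "\<dots> = (\<Sum>z\<in>preds A y. npaths A x z)"
          proof (rule sum.cong)
            fix z assume z: "z \<in> preds A y"
            then have zy: "(z,y) \<in> A" by (simp add: preds_def)
            then have "z \<in> V" "z \<noteq> i" using sub arcs(3)[of y] by auto
            moreover have "z \<noteq> pi" "z \<noteq> pj" using z pn by auto
            ultimately have "z \<in> V'" "z \<noteq> i" by (auto simp: V'_def)
            then show "npaths A' x z = npaths A x z" using 1 zy by blast
          qed simp
          also have "\<dots> = npaths A x y" using npaths_back[OF finA acy ne] by simp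
          finally show ?thesis .
        qed
      qed
    qed
  qed
  have aV': "a \<in> V'" using aV d2 apj by (simp add: V'_def)
  have Mpi: "\<And>x. x \<noteq> i \<Longrightarrow> npaths A x pi = npaths A x i"
    using npaths_back[OF finA acy] Pi by simp
  have Mpj: "\<And>x. x \<noteq> j \<Longrightarrow> npaths A x pj = npaths A x j"
    using npaths_back[OF finA acy] Pj by simp
  have Msplit: "\<And>x. x \<noteq> pi \<Longrightarrow> npaths A x pi = npaths A x pj + npaths A x a"
    using npaths_back[OF finA acy] Ppi apj by simp
  have M2: "\<And>x. x \<noteq> pi \<Longrightarrow> x \<noteq> pj \<Longrightarrow> x \<noteq> i \<Longrightarrow> x \<noteq> j \<Longrightarrow>
      npaths A' x i = npaths A x i - npaths A x j"
  proof -
    fix x assume x: "x \<noteq> pi" "x \<noteq> pj" "x \<noteq> i" "x \<noteq> j"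
    have "npaths A' x i = npaths A' x a" using npaths_back[OF finA' acy' x(3)] P'i by simp
    also have "\<dots> = npaths A x a" using M1[OF x(1,2) aV' d2(2)] .
    finally show "npaths A' x i = npaths A x i - npaths A x j"
      using Mpi[OF x(3)] Mpj[OF x(4)] Msplit[OF x(1)] by simp
  qed
  have rsEq: "\<And>x. x \<noteq> pi \<Longrightarrow> x \<noteq> pj \<Longrightarrow> rs (V', A') x = rs (V, A) x - npaths A x pi"
  proof -
    fix x assume x: "x \<noteq> pi" "x \<noteq> pj"
    have "rs (V, A) x = npaths A x pi + (\<Sum>h\<in>V_H (V, A) - {pi}. npaths A x h)"
      unfolding rs_def using sum.remove[OF finVH piVH] by simp
    moreover have "rs (V', A') x = (\<Sum>h\<in>V_H (V, A) - {pi}. npaths A x h)"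
      unfolding rs_def VHEq
    proof (rule sum.cong)
      fix h assume h: "h \<in> V_H (V, A) - {pi}"
      then have "h \<in> V" "h \<noteq> pi" "is_ret A h" by (auto simp: V_H_def)
      then have "h \<in> V'" "h \<noteq> i" using pnl by (auto simp: V'_def)
      then show "npaths (snd (V', A')) x h = npaths A x h" using M1[OF x] by simp
    qed simp
    ultimately show "rs (V', A') x = rs (V, A) x - npaths A x pi" by simp
  qed
  have np_i: "\<And>y. npaths A i y = (if y = i then 1 else 0)" using npaths_sink[OF Si] by simp
  have np_j: "\<And>y. npaths A j y = (if y = j then 1 else 0)" using npaths_sink[OF Sj] by simp
  have np'_j: "\<And>y. npaths A' j y = (if y = j then 1 else 0)" using npaths_sink[OF S'j] by simp
  have reachpj: "\<And>y. (pj, y) \<in> A\<^sup>* \<Longrightarrow> y = pj \<or> y = j \<or> y = pi \<or> y = i"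
  proof -
    fix y assume "(pj, y) \<in> A\<^sup>*"
    then show "y = pj \<or> y = j \<or> y = pi \<or> y = i"
    proof (cases rule: converse_rtranclE)
      case base then show ?thesis by simp
    next
      case (step z)
      then have "z = j \<or> z = pi" using arcs(7) by blast
      then show ?thesis
      proof
        assume "z = j" then show ?thesis using step sink_rt[OF Sj] by blast
      next
        assume zpi: "z = pi"
        have "(pi, y) \<in> A\<^sup>*" using step zpi by simp
        then show ?thesis
        proof (cases rule: converse_rtranclE)
          case base then show ?thesis by simp
        next
          case (step w)
          then have "w = i" using arcs(5) by blast
          then show ?thesis using step sink_rt[OF Si] by blast
        qed
      qed
    qed
  qed
  have np_pj0: "\<And>y. y \<noteq> pj \<Longrightarrow> y \<noteq> j \<Longrightarrow> y \<noteq> pi \<Longrightarrow> y \<noteq> i \<Longrightarrow> npaths A pj y = 0"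
    using reachpj npaths_unreach by blast
  have pjpi1: "npaths A pj pi = 1"
    using Msplit[of pj] np_pj0[OF apj d2(3) d2(1) d2(2)] npaths_refl d1 by simp
  have pji1: "npaths A pj i = 1" using Mpi[of pj] pjpi1 d1 by simp
  have pjj1: "npaths A pj j = 1" using Mpj[of pj] npaths_refl d1 by simp
  have VHnot: "\<And>h. h \<in> V_H (V, A) \<Longrightarrow> h \<noteq> i \<and> h \<noteq> j \<and> h \<noteq> pj"
    using pnl by (auto simp: V_H_def)
  have rs_ij: "rs (V, A) i = 0" "rs (V, A) j = 0"
  proof -
    have "\<And>h. h \<in> V_H (V, A) \<Longrightarrow> npaths A i h = 0 \<and> npaths A j h = 0"
      using VHnot np_i np_j by simp
    then show "rs (V, A) i = 0" "rs (V, A) j = 0" by (simp_all add: rs_def)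
  qed
  have rs_pj: "rs (V, A) pj = 1"
  proof -
    have "rs (V, A) pj = npaths A pj pi + (\<Sum>h\<in>V_H (V, A) - {pi}. npaths A pj h)"
      unfolding rs_def using sum.remove[OF finVH piVH] by simp
    moreover have "\<And>h. h \<in> V_H (V, A) - {pi} \<Longrightarrow> npaths A pj h = 0"
      using VHnot np_pj0 by blast
    ultimately show ?thesis using pjpi1 by simp
  qed
  have iLv: "i \<in> Lv (V, A)" "j \<in> Lv (V, A)" using ij by (auto simp: Lv_def)
  have LvV: "\<And>x. x \<in> Lv (V, A) \<Longrightarrow> x \<in> V' \<and> x \<noteq> pj \<and> x \<noteq> pi"
    using pnl by (auto simp: Lv_def V'_def)
  have VTpi: "\<And>v. v \<in> V_T (V, A) \<Longrightarrow> v \<noteq> pi" using pnl by (auto simp: V_T_def)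
  have rs_ge: "\<And>v. npaths A v pi \<le> rs (V, A) v"
  proof -
    fix v show "npaths A v pi \<le> rs (V, A) v"
      unfolding rs_def using member_le_sum[OF piVH, of "npaths A v"] finVH by simp
  qed
  show ?thesis
  proof (intro conjI impI)
    show "inv (reduce (V, A) (i, j))" using inv' red by simp
  next
    assume IH0: "injN (reduce (V, A) (i, j))"
    then have IH: "\<And>u v. u \<in> V_T (V', A') \<Longrightarrow> v \<in> V_T (V', A') \<Longrightarrow> eqv (V', A') u v \<Longrightarrow> u = v"
      using red by (auto simp: injN_def)
    have special: "\<And>u v. u = i \<or> u = j \<or> u = pj \<Longrightarrow> v \<in> V_T (V, A) \<Longrightarrow> eqv (V, A) u v \<Longrightarrow> v = u"
    proof -
      fix u v assume u: "u = i \<or> u = j \<or> u = pj" and v: "v \<in> V_T (V, A)" and e: "eqv (V, A) u v"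
      have ei: "npaths A v i = npaths A u i" and ej: "npaths A v j = npaths A u j"
        and er: "rs (V, A) v = rs (V, A) u"
        using e iLv unfolding eqv_def by auto
      have vpi: "v \<noteq> pi" using VTpi v by blast
      show "v = u"
      proof (rule ccontr)
        assume vu: "v \<noteq> u"
        have vals: "npaths A i i = 1" "npaths A i j = 0" "npaths A j i = 0" "npaths A j j = 1"
          using np_i[of i] np_i[of j] np_j[of i] np_j[of j] ij(1) by simp_all
        show False
        proof (cases "v = i \<or> v = j \<or> v = pj")
          case True
          from True u vu ei ej vals pji1 pjj1 show False by (elim disjE) simp_all
        next
          case False
          then have vn: "v \<noteq> i" "v \<noteq> j" "v \<noteq> pj" by auto
          have "u = i \<or> u = j \<or> u = pj" by fact
          then show False
          proof (elim disjE)
            assume ui: "u = i"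
            have "npaths A v pi = 1" using Mpi[OF vn(1)] ei ui vals by simp
            moreover have "rs (V, A) v = 0" using er ui rs_ij by simp
            ultimately show False using rs_ge[of v] by simp
          next
            assume uj: "u = j"
            have "npaths A v pj = 1" using Mpj[OF vn(2)] ej uj vals by simp
            then have "npaths A v i \<ge> 1" using Msplit[OF vpi] Mpi[OF vn(1)] by simp
            then show False using ei uj vals by simp
          next
            assume up: "u = pj"
            have vV: "v \<in> V_T (V', A')" using v vn VTEq by blast
            have "j \<in> V_T (V, A)" using ij by (simp add: V_T_def)
            then have jV: "j \<in> V_T (V', A')" using VTEq d1 by blast
            have vi1: "npaths A v i = 1" "npaths A v j = 1" using ei ej up pji1 pjj1 by simp_all
            have "eqv (V', A') v j"
              unfolding eqv_def
            proof (intro conjI ballI)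
              fix x assume x: "x \<in> Lv (V', A')"
              then have xL: "x \<in> Lv (V, A)" using LvEq by simp
              then have xV: "x \<in> V'" "x \<noteq> pj" "x \<noteq> pi" using LvV by auto
              show "npaths (snd (V', A')) v x = npaths (snd (V', A')) j x"
              proof (cases "x = i")
                case True
                then show ?thesis using M2[OF vpi vn(3) vn(1) vn(2)] vi1 np'_j ij(1) by simp
              next
                case False
                have "npaths A' v x = npaths A v x" using M1[OF vpi vn(3) xV(1) False] .
                also have "\<dots> = npaths A pj x" using e xL up unfolding eqv_def by simp
                also have "\<dots> = (if x = j then 1 else 0)"
                  using np_pj0[OF xV(2) _ xV(3) False] pjj1 by (cases "x = j") simp_all
                also have "\<dots> = npaths A' j x" using np'_j by simp
                finally show ?thesis by simp
              qed
            next
              have "rs (V', A') v = rs (V, A) v - npaths A v pi" using rsEq[OF vpi vn(3)] .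
              also have "\<dots> = 0" using er up rs_pj Mpi[OF vn(1)] vi1 by simp
              also have "\<dots> = rs (V', A') j" using rsEq[of j] jpi d1 rs_ij by simp
              finally show "rs (V', A') v = rs (V', A') j" .
            qed
            then have "v = j" using IH vV jV by blast
            then show False using vn by simp
          qed
        qed
      qed
    qed
    have esym: "\<And>u v. eqv (V, A) u v \<Longrightarrow> eqv (V, A) v u" by (auto simp: eqv_def)
    show "injN (V, A)" unfolding injN_def
    proof (intro ballI impI)
      fix u v assume u: "u \<in> V_T (V, A)" and v: "v \<in> V_T (V, A)" and e: "eqv (V, A) u v"
      show "u = v"
      proof (cases "u = i \<or> u = j \<or> u = pj")
        case True then show ?thesis using special[OF True v e] by simp
      next
        case nu: False
        show ?thesis
        proof (cases "v = i \<or> v = j \<or> v = pj")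
          case True then show ?thesis using special[OF True u esym[OF e]] by simp
        next
          case nv: False
          have upi: "u \<noteq> pi" "v \<noteq> pi" using VTpi u v by auto
          have uV: "u \<in> V_T (V', A')" "v \<in> V_T (V', A')" using u v nu nv VTEq by auto
          have ei: "npaths A u i = npaths A v i" and ej: "npaths A u j = npaths A v j"
            and er: "rs (V, A) u = rs (V, A) v"
            using e iLv unfolding eqv_def by auto
          have "eqv (V', A') u v" unfolding eqv_def
          proof (intro conjI ballI)
            fix x assume x: "x \<in> Lv (V', A')"
            then have xL: "x \<in> Lv (V, A)" using LvEq by simp
            then have xV: "x \<in> V'" using LvV by auto
            show "npaths (snd (V', A')) u x = npaths (snd (V', A')) v x"
            proof (cases "x = i")
              case True
              then show ?thesis using M2[of u] M2[of v] upi nu nv ei ej by simp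
            next
              case False
              then show ?thesis using M1[of u x] M1[of v x] upi nu nv xV e xL
                unfolding eqv_def by simp
            qed
          next
            show "rs (V', A') u = rs (V', A') v"
              using rsEq[of u] rsEq[of v] upi nu nv er Mpi[of u] Mpi[of v] ei by simp
          qed
          then show ?thesis using IH uV by blast
        qed
      qed
    qed
  qed
qed


lemma main_ind: "inv N \<Longrightarrow> reducible_seq N S \<Longrightarrow> is_I (reduce_seq N S) \<Longrightarrow> injN N"
proof (induction S arbitrary: N)
  case Nil
  then obtain r x where rx: "r \<noteq> x" "N = ({r, x}, {(r, x)})" by (auto simp: is_I_def)
  have "\<not> is_leaf {(r, x)} r" "\<not> is_tree_node {(r, x)} r"
    using rx(1) by (auto simp: is_leaf_def is_tree_node_def indeg_def)
  then have "V_T N \<subseteq> {x}" using rx by (auto simp: V_T_def)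
  then show ?case by (auto simp: injN_def)
next
  case (Cons s S)
  obtain V A where N: "N = (V, A)" by (cases N)
  obtain i j where s: "s = (i, j)" by (cases s)
  have red: "reducible N s" and rs: "reducible_seq (reduce N s) S" and isI: "is_I (reduce_seq (reduce N s) S)"
    using Cons.prems by auto
  have step: "inv (reduce (V, A) (i, j)) \<and> (injN (reduce (V, A) (i, j)) \<longrightarrow> injN (V, A))"
    using red cherry_step[of V A i j] ret_step[of V A i j] Cons.prems(1) N s by (auto simp: reducible_def)
  then show ?case using Cons.IH[of "reduce N s"] rs isI N s by auto
qed

theorem mainTheorem8:
  assumes "orchard n X N"
  shows "(\<forall>u\<in>V_T N. \<forall>v\<in>V_T N. mu n X N u = mu n X N v \<longrightarrow> u = v)
         \<and> (\<forall>x. count (mu_rep n X N) x \<le> 1)"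
proof -
  have ph: "phylo_net n X N" and ex: "\<exists>S. reducible_seq N S \<and> is_I (reduce_seq N S)"
    using assms by (auto simp: orchard_def)
  have inv: "inv N" using ph by (auto simp: phylo_net_def inv_def Let_def)
  have LvX: "Lv N = X" and Xn: "X \<subseteq> {1..n}" using ph by (auto simp: phylo_net_def Lv_def Let_def)
  have inj: "injN N" using ex main_ind inv by blast
  have P1: "\<forall>u\<in>V_T N. \<forall>v\<in>V_T N. mu n X N u = mu n X N v \<longrightarrow> u = v"
  proof (intro ballI impI)
    fix u v assume u: "u \<in> V_T N" and v: "v \<in> V_T N" and e: "mu n X N u = mu n X N v"
    have co: "\<And>k. k < Suc n \<Longrightarrow>
      (if k = 0 then (\<Sum>h\<in>V_H N. npaths (snd N) u h) else if k \<in> X then npaths (snd N) u k else 0) =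
      (if k = 0 then (\<Sum>h\<in>V_H N. npaths (snd N) v h) else if k \<in> X then npaths (snd N) v k else 0)"
    proof -
      fix k assume k: "k < Suc n"
      have "k \<in> set [0..<Suc n]" using k by (simp del: upt_Suc)
      then show "(if k = 0 then (\<Sum>h\<in>V_H N. npaths (snd N) u h) else if k \<in> X then npaths (snd N) u k else 0) =
      (if k = 0 then (\<Sum>h\<in>V_H N. npaths (snd N) v h) else if k \<in> X then npaths (snd N) v k else 0)"
        using e unfolding mu_def map_eq_conv by blast
    qed
    have "eqv N u v" unfolding eqv_def
    proof (intro conjI ballI)
      fix x assume "x \<in> Lv N"
      then have x: "x \<in> X" "x \<noteq> 0" "x < Suc n" using LvX Xn by auto
      show "npaths (snd N) u x = npaths (snd N) v x" using co[OF x(3)] x by simp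
    next
      show "rs N u = rs N v" using co[of 0] by (simp add: rs_def)
    qed
    then show "u = v" using inj u v by (auto simp: injN_def)
  qed
  then have "inj_on (mu n X N) (V_T N)" by (auto simp: inj_on_def)
  then have "mu_rep n X N = mset_set (mu n X N ` V_T N)"
    unfolding mu_rep_def by (rule image_mset_mset_set)
  then have "\<forall>x. count (mu_rep n X N) x \<le> 1" by (simp add: count_mset_set')
  with P1 show ?thesis by blast
qed

end
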